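(* Let $\mathcal{M}_{\mathbb{P}}=(\mathcal{M},\mathbb{P})$ be an uncertain parametric MDP, let $\eta\in(0,1)$ be a desired lower bound and $\beta\in(0,1)$ a desired confidence probability, and set \[N=\Big\lceil \frac{\log(1-\beta)}{\log\eta}\Big\rceil .\] If $\mathcal{U}_N$ is a set of $N$ parameter instantiations sampled independently from $\mathbb{P}$ and the threshold $\lambda^*(\mathcal{U}_N)$ of the specification $\varphi$ is chosen, for any sample set, such that $\mathcal{M}[u]\models\varphi$ for all $u\in\mathcal{U}_N$, then $\mathbb{P}^N\{F(\mathcal{M}_{\mathbb{P}},\varphi)\ge\eta\}\ge\beta$; moreover, this $N$ is the smallest sample size for which the lower bound $(1-\beta)^{1/N}$ of the guarantee $\mathbb{P}^N\{F(\mathcal{M}_{\mathbb{P}},\varphi)\ge(1-\beta)^{1/N}\}\ge\beta$ is at least $\eta$.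
   Context: A parametric MDP (pMDP) is $\mathcal{M}=(S,\mathit{Act},s_I,V,\mathcal{P})$ with finite states, finite actions, initial state, finite parameter set $V$ and transition function $\mathcal{P}:S\times\mathit{Act}\times S\to\mathbb{Q}[V]$. Instantiations $u:V\to\mathbb{R}$ form the parameter space $\mathcal{V}_{\mathcal{M}}$; $\mathcal{M}[u]$ is the instantiated MDP, assumed well-defined and graph-preserving. An uncertain pMDP is $\mathcal{M}_{\mathbb{P}}=(\mathcal{M},\mathbb{P})$ with $\mathbb{P}$ a probability distribution on $\mathcal{V}_{\mathcal{M}}$. A specification $\varphi$ consists of a measure on MDPs (e.g. max/min reachability probability or expected reward), a comparison operator in $\{<,\le,\ge,>\}$ and a threshold; $\mathcal{M}[u]\models\varphi$ means the measure's value on $\mathcal{M}[u]$ satisfies the comparison. The satisfaction probability is $F(\mathcal{M}_{\mathbb{P}},\varphi)=\int I_\varphi(u)\,d\mathbb{P}(u)$ with $I_\varphi(u)=1$ iff $\mathcal{M}[u]\models\varphi$. $\mathbb{P}^N$ is the product measure of the i.i.d. sample set; $\lceil x\rceil$ rounds up to the nearest integer. *)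

theory Defs
  imports "HOL-Probability.Probability"
begin

record ('s, 'a) mdp =
  m_states :: "'s set"
  m_acts   :: "'a set"
  m_init   :: 's
  m_trans  :: "'s \<Rightarrow> 'a \<Rightarrow> 's \<Rightarrow> real"

type_synonym 'v inst = "'v \<Rightarrow> real"

text \<open>A polynomial over the finite variable set V with rational coefficients,
  represented as the (polynomial) function on instantiations it induces:
  a finite sum of rational multiples of monomials over V.\<close>
definition is_rat_poly :: "'v set \<Rightarrow> ('v inst \<Rightarrow> real) \<Rightarrow> bool" where
  "is_rat_poly V p \<longleftrightarrow>
     (\<exists>ms :: ('v \<Rightarrow> nat) set. \<exists>c :: ('v \<Rightarrow> nat) \<Rightarrow> real.
        finite ms \<and> (\<forall>m\<in>ms. \<forall>x. x \<notin> V \<longrightarrow> m x = 0) \<and> (\<forall>m\<in>ms. c m \<in> \<rat>) \<and>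
        p = (\<lambda>u. \<Sum>m\<in>ms. c m * (\<Prod>x\<in>V. u x ^ m x)))"

record ('s, 'a, 'v) pmdp =
  p_states :: "'s set"
  p_acts   :: "'a set"
  p_init   :: 's
  p_params :: "'v set"
  p_trans  :: "'s \<Rightarrow> 'a \<Rightarrow> 's \<Rightarrow> ('v inst \<Rightarrow> real)"

definition pmdp :: "('s, 'a, 'v) pmdp \<Rightarrow> bool" where
  "pmdp M \<longleftrightarrow> finite (p_states M) \<and> finite (p_acts M) \<and> p_init M \<in> p_states M \<and>
     finite (p_params M) \<and>
     (\<forall>s\<in>p_states M. \<forall>a\<in>p_acts M. \<forall>s'\<in>p_states M. is_rat_poly (p_params M) (p_trans M s a s'))"

definition inst :: "('s, 'a, 'v) pmdp \<Rightarrow> 'v inst \<Rightarrow> ('s, 'a) mdp" where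
  "inst M u = \<lparr> m_states = p_states M, m_acts = p_acts M, m_init = p_init M,
                m_trans = (\<lambda>s a s'. p_trans M s a s' u) \<rparr>"

definition enabled :: "('s, 'a, 'v) pmdp \<Rightarrow> 's \<Rightarrow> 'a set" where
  "enabled M s = {a \<in> p_acts M. \<exists>s'\<in>p_states M. p_trans M s a s' \<noteq> (\<lambda>_. 0)}"

definition well_defined :: "('s, 'a, 'v) pmdp \<Rightarrow> 'v inst \<Rightarrow> bool" where
  "well_defined M u \<longleftrightarrow>
     (\<forall>s\<in>p_states M. \<forall>a\<in>enabled M s.
        (\<forall>s'\<in>p_states M. 0 \<le> p_trans M s a s' u \<and> p_trans M s a s' u \<le> 1) \<and>
        (\<Sum>s'\<in>p_states M. p_trans M s a s' u) = 1)"

definition graph_preserving :: "('s, 'a, 'v) pmdp \<Rightarrow> 'v inst \<Rightarrow> bool" where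
  "graph_preserving M u \<longleftrightarrow>
     (\<forall>s\<in>p_states M. \<forall>a\<in>p_acts M. \<forall>s'\<in>p_states M.
        p_trans M s a s' \<noteq> (\<lambda>_. 0) \<longrightarrow> p_trans M s a s' u \<noteq> 0)"

datatype cmp_op = Lt | Le | Ge | Gt

fun cmp :: "cmp_op \<Rightarrow> ereal \<Rightarrow> ereal \<Rightarrow> bool" where
  "cmp Lt x t \<longleftrightarrow> x < t"
| "cmp Le x t \<longleftrightarrow> x \<le> t"
| "cmp Ge x t \<longleftrightarrow> x \<ge> t"
| "cmp Gt x t \<longleftrightarrow> x > t"

text \<open>A specification: a measure on MDPs (e.g. max/min reachability probability,
  expected reward; values in the extended reals), a comparison operator, a threshold.\<close>
record ('s, 'a) spec =
  s_meas :: "('s, 'a) mdp \<Rightarrow> ereal"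
  s_op   :: cmp_op
  s_thr  :: ereal

definition sats :: "('s, 'a) mdp \<Rightarrow> ('s, 'a) spec \<Rightarrow> bool" where
  "sats D \<phi> \<longleftrightarrow> cmp (s_op \<phi>) (s_meas \<phi> D) (s_thr \<phi>)"

definition sat_prob :: "('s, 'a, 'v) pmdp \<Rightarrow> 'v inst measure \<Rightarrow> ('s, 'a) spec \<Rightarrow> real" where
  "sat_prob M P \<phi> = (\<integral>u. (if sats (inst M u) \<phi> then 1 else 0) \<partial>P)"

end

theory Submission
  imports Defs
begin

lemma downclosed_ereal_borel:
  fixes D :: "ereal set"
  assumes dc: "\<And>x y. y \<in> D \<Longrightarrow> x \<le> y \<Longrightarrow> x \<in> D"
  shows "D \<in> sets borel"
proof (cases "Sup D \<in> D")
  case True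
  have "D = {..Sup D}" using True dc by (auto intro: Sup_upper)
  then show ?thesis using atMost_borel[of "Sup D"] by simp
next
  case False
  have "D = {..<Sup D}"
  proof
    show "D \<subseteq> {..<Sup D}" using False by (metis Sup_upper lessThan_iff order_less_le subsetI)
    show "{..<Sup D} \<subseteq> D"
    proof
      fix x assume "x \<in> {..<Sup D}"
      then obtain d where "d \<in> D" "x < d" by (auto simp: less_Sup_iff)
      then show "x \<in> D" using dc by auto
    qed
  qed
  then show ?thesis using lessThan_borel[of "Sup D"] by simp
qed

lemma core_bound:
  fixes X :: "'b \<Rightarrow> ereal"
  assumes P: "prob_space P" and X: "X \<in> borel_measurable P" and eta: "0 \<le> \<eta>"
    and dc: "\<And>x y. y \<in> S \<Longrightarrow> x \<le> y \<Longrightarrow> x \<in> S"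
    and bd: "\<And>x. x \<in> S \<Longrightarrow> measure P {u\<in>space P. X u \<le> x} \<le> \<eta>"
  shows "measure P {u\<in>space P. X u \<in> S} \<le> \<eta>"
proof -
  interpret prob_space P by (rule P)
  show ?thesis
  proof (cases "S = {}")
    case True then show ?thesis using eta by simp
  next
    case ne: False
    show ?thesis
    proof (cases "Sup S \<in> S")
      case True
      have "{u\<in>space P. X u \<in> S} = {u\<in>space P. X u \<le> Sup S}"
        using True dc by (auto intro: Sup_upper)
      then show ?thesis using bd[OF True] by simp
    next
      case False
      obtain f :: "nat \<Rightarrow> ereal" where f: "incseq f" "range f \<subseteq> S" "Sup S = (SUP i. f i)"
        using Sup_countable_SUP[OF ne] by blast
      define A where "A i = {u\<in>space P. X u \<le> f i}" for i
      have Ameas: "range A \<subseteq> sets P" unfolding A_def using X by auto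
      have Ainc: "incseq A" unfolding A_def incseq_def using f(1)
        by (auto simp: incseq_def intro: order_trans)
      have eq: "{u\<in>space P. X u \<in> S} = (\<Union>i. A i)"
      proof
        show "{u\<in>space P. X u \<in> S} \<subseteq> (\<Union>i. A i)"
        proof
          fix u assume u: "u \<in> {u\<in>space P. X u \<in> S}"
          then have "X u \<le> Sup S" by (auto intro: Sup_upper)
          moreover have "X u \<noteq> Sup S" using u False by auto
          ultimately have "X u < (SUP i. f i)" using f(3) by simp
          then obtain i where "X u < f i" by (auto simp: less_SUP_iff)
          then show "u \<in> (\<Union>i. A i)" using u unfolding A_def by (auto intro!: exI[of _ i] less_imp_le)
        qed
        show "(\<Union>i. A i) \<subseteq> {u\<in>space P. X u \<in> S}"
          unfolding A_def using f(2) dc by blast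
      qed
      have lim: "(\<lambda>i. measure P (A i)) \<longlonglongrightarrow> measure P (\<Union>i. A i)"
        by (rule finite_Lim_measure_incseq[OF Ameas Ainc])
      have "\<And>i. measure P (A i) \<le> \<eta>" unfolding A_def using bd f(2) by auto
      then have "measure P (\<Union>i. A i) \<le> \<eta>"
        using lim by (intro LIMSEQ_le_const2[OF lim]) auto
      then show ?thesis using eq by simp
    qed
  qed
qed

lemma key_bound:
  fixes X :: "'b \<Rightarrow> ereal" and lam :: "(nat \<Rightarrow> 'b) \<Rightarrow> ereal" and R :: "ereal \<Rightarrow> ereal \<Rightarrow> bool"
  assumes P: "prob_space P" and X: "X \<in> borel_measurable P"
    and lam: "lam \<in> borel_measurable (PiM {..<N} (\<lambda>_. P))"
    and R: "R = (\<le>) \<or> R = (<)" and eta: "0 \<le> \<eta>"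
    and all: "\<forall>us\<in>space (PiM {..<N} (\<lambda>_. P)). \<forall>i<N. R (X (us i)) (lam us)"
  shows "measure (PiM {..<N} (\<lambda>_. P))
     {us\<in>space (PiM {..<N} (\<lambda>_. P)). \<eta> \<le> measure P {u\<in>space P. R (X u) (lam us)}} \<ge> 1 - \<eta>^N"
proof -
  interpret prob_space P by (rule P)
  let ?Q = "PiM {..<N} (\<lambda>_. P)"
  interpret Q: prob_space ?Q by (intro prob_space_PiM P)
  interpret PP: product_prob_space "\<lambda>_::nat. P" "{..<N}" by (intro product_prob_spaceI P)
  define F where "F t = measure P {u\<in>space P. R (X u) t}" for t
  have Rmono: "R x t'" if "R x t" "t \<le> t'" for x t t'
    using R that by (auto intro: order_trans less_le_trans)
  have Rmono2: "R x' t" if "x' \<le> x" "R x t" for x x' t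
    using R that by (auto intro: order_trans le_less_trans)
  have Rmeas: "{u\<in>space P. R (X u) t} \<in> sets P" for t
  proof -
    have "{u\<in>space P. X u \<le> t} \<in> sets P" "{u\<in>space P. X u < t} \<in> sets P"
      using X by auto
    then show ?thesis using R by auto
  qed
  have Fmono: "F t \<le> F t'" if "t \<le> t'" for t t'
    unfolding F_def by (rule finite_measure_mono) (use that Rmono Rmeas in auto)
  define B where "B = {t. F t < \<eta>}"
  have Bdc: "x \<in> B" if "y \<in> B" "x \<le> y" for x y
    using that Fmono[of x y] unfolding B_def by auto
  have Bmeas: "{us\<in>space ?Q. lam us \<in> B} \<in> sets ?Q"
  proof -
    have "lam -` B \<inter> space ?Q \<in> sets ?Q"
      by (rule measurable_sets[OF lam downclosed_ereal_borel]) (use Bdc in blast)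
    moreover have "lam -` B \<inter> space ?Q = {us\<in>space ?Q. lam us \<in> B}" by auto
    ultimately show ?thesis by simp
  qed
  define S where "S = {x. \<exists>t. F t < \<eta> \<and> R x t}"
  have Sdc: "x \<in> S" if "y \<in> S" "x \<le> y" for x y
    using that Rmono2 unfolding S_def by blast
  have Sbd: "measure P {u\<in>space P. X u \<le> x} \<le> \<eta>" if xS: "x \<in> S" for x
  proof -
    obtain t where t: "F t < \<eta>" "R x t" using xS unfolding S_def by blast
    have "measure P {u\<in>space P. X u \<le> x} \<le> F t"
      unfolding F_def by (rule finite_measure_mono) (use t Rmono2 Rmeas in auto)
    then show ?thesis using t by simp
  qed
  define A where "A = {u\<in>space P. X u \<in> S}"
  have Ameas: "A \<in> sets P"
  proof -
    have "X -` S \<inter> space P \<in> sets P"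
      by (rule measurable_sets[OF X downclosed_ereal_borel]) (use Sdc in blast)
    moreover have "X -` S \<inter> space P = A" unfolding A_def by auto
    ultimately show ?thesis by simp
  qed
  have PA: "measure P A \<le> \<eta>" unfolding A_def
    by (rule core_bound[OF P X eta Sdc Sbd])
  have sub: "{us\<in>space ?Q. lam us \<in> B} \<subseteq> {us\<in>space ?Q. \<forall>i\<in>{..<N}. us i \<in> A}"
  proof (intro subsetI)
    fix us assume usm: "us \<in> {us\<in>space ?Q. lam us \<in> B}"
    then have us: "us \<in> space ?Q" "lam us \<in> B" by auto
    have "us i \<in> A" if i: "i \<in> {..<N}" for i
    proof -
    have "us i \<in> space P" using us(1) i by (auto simp: space_PiM)
    moreover have "R (X (us i)) (lam us)" using all us(1) i by auto
    ultimately show "us i \<in> A" using us(2) unfolding A_def S_def B_def by auto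
    qed
    then show "us \<in> {us\<in>space ?Q. \<forall>i\<in>{..<N}. us i \<in> A}" using us by auto
  qed
  have Cmeas: "{us\<in>space ?Q. \<forall>i\<in>{..<N}. us i \<in> A} \<in> sets ?Q"
    using Ameas by measurable
  have "emeasure ?Q {us\<in>space ?Q. \<forall>i\<in>{..<N}. us i \<in> A} = (\<Prod>i\<in>{..<N}. emeasure P A)"
    by (rule PP.emeasure_PiM_Collect) (use Ameas in auto)
  then have "ennreal (Q.prob {us\<in>space ?Q. \<forall>i\<in>{..<N}. us i \<in> A}) = ennreal (prob A ^ N)"
    by (simp add: Q.emeasure_eq_measure emeasure_eq_measure prod_ennreal ennreal_power)
  then have Ceq: "Q.prob {us\<in>space ?Q. \<forall>i\<in>{..<N}. us i \<in> A} = prob A ^ N"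
    by (simp add: ennreal_inj)
  have "Q.prob {us\<in>space ?Q. lam us \<in> B} \<le> prob A ^ N"
    using Q.finite_measure_mono[OF sub Cmeas] Ceq by simp
  also have "\<dots> \<le> \<eta> ^ N" by (rule power_mono[OF PA]) simp
  finally have bad: "Q.prob {us\<in>space ?Q. lam us \<in> B} \<le> \<eta> ^ N" .
  have "{us\<in>space ?Q. \<eta> \<le> measure P {u\<in>space P. R (X u) (lam us)}}
      = space ?Q - {us\<in>space ?Q. lam us \<in> B}"
    unfolding B_def F_def by auto
  then have "Q.prob {us\<in>space ?Q. \<eta> \<le> measure P {u\<in>space P. R (X u) (lam us)}}
      = 1 - Q.prob {us\<in>space ?Q. lam us \<in> B}"
    using Q.prob_compl[OF Bmeas] by simp
  then show ?thesis using bad by simp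
qed

lemma arith_part:
  fixes \<eta> \<beta> :: real and N :: nat
  assumes "0 < \<eta>" and "\<eta> < 1" and "0 < \<beta>" and "\<beta> < 1"
    and N: "N = nat \<lceil>ln (1 - \<beta>) / ln \<eta>\<rceil>"
  shows "\<eta> ^ N \<le> 1 - \<beta> \<and> 1 \<le> N \<and> (1 - \<beta>) powr (1 / real N) \<ge> \<eta>
       \<and> (\<forall>n::nat. 1 \<le> n \<and> n < N \<longrightarrow> (1 - \<beta>) powr (1 / real n) < \<eta>)"
proof -
  define L where "L = ln \<eta>"
  define K where "K = ln (1 - \<beta>)"
  have L: "L < 0" unfolding L_def using assms by simp
  have K: "K < 0" unfolding K_def using assms by simp
  define c where "c = K / L"
  have c: "c > 0" unfolding c_def using K L by (simp add: divide_neg_neg)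
  have cL: "c * L = K" unfolding c_def using L by simp
  have Nc: "real N \<ge> c" unfolding N c_def K_def L_def
    by (metis le_of_int_ceiling of_int_of_nat_eq of_nat_nat ceiling_le_zero c c_def K_def L_def
        linorder_not_le nat_0_iff order_less_le)
  have N1: "1 \<le> N"
  proof -
    have "0 < \<lceil>c\<rceil>" using c by simp
    then show ?thesis unfolding N c_def K_def L_def by linarith
  qed
  have NL: "real N * L \<le> K"
    using mult_right_mono_neg[OF Nc, of L] L cL by simp
  have p1: "\<eta> ^ N \<le> 1 - \<beta>"
  proof -
    have "ln (\<eta> ^ N) = real N * L" unfolding L_def using assms by (simp add: ln_realpow)
    then have "ln (\<eta> ^ N) \<le> ln (1 - \<beta>)" using NL K_def by simp
    then show ?thesis using assms by (simp add: ln_le_cancel_iff)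
  qed
  have p2: "(1 - \<beta>) powr (1 / real N) \<ge> \<eta>"
  proof -
    have "L \<le> K / real N" using NL N1 by (simp add: field_simps)
    then have "exp L \<le> exp (1 / real N * K)" by simp
    then show ?thesis unfolding L_def K_def powr_def using assms by simp
  qed
  have p3: "(1 - \<beta>) powr (1 / real n) < \<eta>" if n: "1 \<le> n" "n < N" for n :: nat
  proof -
    have "int n < \<lceil>c\<rceil>" using n(2) unfolding N c_def K_def L_def by linarith
    then have "real n < c" by (simp add: less_ceiling_iff)
    then have "K < real n * L" using mult_strict_right_mono_neg[of "real n" c L] L cL by simp
    then have "K / real n < L" using n(1) by (simp add: field_simps)
    then have "exp (1 / real n * K) < exp L" by simp
    then show ?thesis unfolding L_def K_def powr_def using assms by simp
  qed
  show ?thesis using p1 N1 p2 p3 by blast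
qed

theorem corollary1:
  fixes M :: "('s, 'a, 'v) pmdp" and P :: "'v inst measure"
    and \<phi> :: "('s, 'a) spec" and \<eta> \<beta> :: real and N :: nat
    and lam :: "(nat \<Rightarrow> 'v inst) \<Rightarrow> ereal"
  assumes "pmdp M" and "prob_space P"
    and "\<forall>u\<in>space P. well_defined M u \<and> graph_preserving M u"
    and "(\<lambda>u. s_meas \<phi> (inst M u)) \<in> borel_measurable P"
    and "0 < \<eta>" and "\<eta> < 1" and "0 < \<beta>" and "\<beta> < 1"
    and "N = nat \<lceil>ln (1 - \<beta>) / ln \<eta>\<rceil>"
    and "lam \<in> borel_measurable (PiM {..<N} (\<lambda>_. P))"
    and "\<forall>us\<in>space (PiM {..<N} (\<lambda>_. P)). \<forall>i<N.
           sats (inst M (us i)) (\<phi>\<lparr>s_thr := lam us\<rparr>)"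
  shows "measure (PiM {..<N} (\<lambda>_. P))
           {us \<in> space (PiM {..<N} (\<lambda>_. P)). sat_prob M P (\<phi>\<lparr>s_thr := lam us\<rparr>) \<ge> \<eta>} \<ge> \<beta>
       \<and> 1 \<le> N \<and> (1 - \<beta>) powr (1 / real N) \<ge> \<eta>
       \<and> (\<forall>n::nat. 1 \<le> n \<and> n < N \<longrightarrow> (1 - \<beta>) powr (1 / real n) < \<eta>)"
proof -
  note ar = arith_part[OF assms(5-9)]
  define X where "X u = s_meas \<phi> (inst M u)" for u
  have X: "X \<in> borel_measurable P" unfolding X_def by (rule assms(4))
  have Xn: "(\<lambda>u. - X u) \<in> borel_measurable P" using X by measurable
  have lamn: "(\<lambda>us. - lam us) \<in> borel_measurable (PiM {..<N} (\<lambda>_. P))"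
    using assms(10) by measurable
  let ?Q = "PiM {..<N} (\<lambda>_. P)"
  have sp: "sat_prob M P (\<phi>\<lparr>s_thr := t\<rparr>) = measure P {u\<in>space P. cmp (s_op \<phi>) (X u) t}" for t
  proof -
    have "(\<lambda>u. if sats (inst M u) (\<phi>\<lparr>s_thr := t\<rparr>) then 1 else 0 :: real)
        = indicator {u. cmp (s_op \<phi>) (X u) t}"
      by (auto simp: sats_def indicator_def fun_eq_iff X_def)
    then show ?thesis unfolding sat_prob_def by (simp add: Int_def conj_commute)
  qed
  have all: "\<forall>us\<in>space ?Q. \<forall>i<N. cmp (s_op \<phi>) (X (us i)) (lam us)"
    using assms(11) by (simp add: sats_def X_def)
  have eta0: "0 \<le> \<eta>" using assms by simp
  have main: "measure ?Q {us\<in>space ?Q. \<eta> \<le> measure P {u\<in>space P. cmp (s_op \<phi>) (X u) (lam us)}}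
      \<ge> 1 - \<eta> ^ N"
  proof (cases "s_op \<phi>")
    case Lt
    show ?thesis using key_bound[OF assms(2) X assms(10), of "(<)" \<eta>] all eta0 Lt by simp
  next
    case Le
    show ?thesis using key_bound[OF assms(2) X assms(10), of "(\<le>)" \<eta>] all eta0 Le by simp
  next
    case Ge
    show ?thesis using key_bound[OF assms(2) Xn lamn, of "(\<le>)" \<eta>] all eta0 Ge by simp
  next
    case Gt
    show ?thesis using key_bound[OF assms(2) Xn lamn, of "(<)" \<eta>] all eta0 Gt by simp
  qed
  then have "measure ?Q {us\<in>space ?Q. sat_prob M P (\<phi>\<lparr>s_thr := lam us\<rparr>) \<ge> \<eta>} \<ge> \<beta>"
    using ar by (simp add: sp)
  then show ?thesis using ar by blast
qed

end
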